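(* Let $S$ be a right ample semigroup embedded as a unary semigroup into an inverse semigroup $Q$ (so $a^*=a^{-1}a$ for all $a\in S$). Then for all $a,b,c,x\in S$: (i) $a\leq_{\mathcal{L}^Q}b$ if and only if $a^*=a^*b^*$, if and only if $a\leq_{\mathcal{L}^*}b$; (ii) $L_a\wedge L_b=L_c$ if and only if $c^*=a^*b^*$; (iii) $L_a\wedge L_b=L_{xa}$ if and only if $ab^*=x^*a$. Here $L_a$ denotes the $\mathcal{L}$-class of $a$ in $Q$ and $\wedge$ the meet in the semilattice $Q/\mathcal{L}$.
   Context: $a^{-1}$ is the unique inverse in $Q$; $a\leq_{\mathcal{L}^Q}b$ iff $Q^1a\subseteq Q^1b$, and $Q/\mathcal{L}$ is ordered accordingly (it is a meet semilattice). On $S$: $a\leq_{\mathcal{L}^*}b$ iff for all $x,y\in S^1$, $bx=by$ implies $ax=ay$; $a\,\mathcal{L}^*\,b$ iff $a\leq_{\mathcal{L}^*}b$ and $b\leq_{\mathcal{L}^*}a$. $S$ is right adequate if its idempotents commute and every $a$ is $\mathcal{L}^*$-related to a (unique) idempotent $a^*$; right ample if moreover $b^*a=a(ba)^*$ for all $a,b\in S$. *)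

theory Defs
  imports Main
begin

(* The inverse semigroup Q is the whole (multiplicative) type 'q. *)
definition inverse_semigroup :: "'q::semigroup_mult itself \<Rightarrow> bool" where
  "inverse_semigroup _ \<longleftrightarrow> (\<forall>a::'q. \<exists>!b. a * b * a = a \<and> b * a * b = b)"

definition qinv :: "'q::semigroup_mult \<Rightarrow> 'q" where
  "qinv a = (THE b. a * b * a = a \<and> b * a * b = b)"

definition Q1mult :: "'q::semigroup_mult \<Rightarrow> 'q set" where
  "Q1mult a = insert a (range (\<lambda>q. q * a))"

definition leqLQ :: "'q::semigroup_mult \<Rightarrow> 'q \<Rightarrow> bool" where
  "leqLQ a b \<longleftrightarrow> Q1mult a \<subseteq> Q1mult b"

definition Lclass :: "'q::semigroup_mult \<Rightarrow> 'q set" where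
  "Lclass a = {y. Q1mult y = Q1mult a}"

definition Lclass_le :: "'q::semigroup_mult set \<Rightarrow> 'q set \<Rightarrow> bool" where
  "Lclass_le A B \<longleftrightarrow> (\<exists>a b. A = Lclass a \<and> B = Lclass b \<and> leqLQ a b)"

definition Lmeet_is :: "'q::semigroup_mult set \<Rightarrow> 'q set \<Rightarrow> 'q set \<Rightarrow> bool" where
  "Lmeet_is A B M \<longleftrightarrow> M \<in> range Lclass \<and> Lclass_le M A \<and> Lclass_le M B \<and>
     (\<forall>D \<in> range Lclass. Lclass_le D A \<and> Lclass_le D B \<longrightarrow> Lclass_le D M)"

(* Subsemigroup S; S^1 represented by options, None = adjoined identity *)
definition subsemigroup :: "'q::semigroup_mult set \<Rightarrow> bool" where
  "subsemigroup S \<longleftrightarrow> (\<forall>a\<in>S. \<forall>b\<in>S. a * b \<in> S)"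

definition S1 :: "'q set \<Rightarrow> 'q option set" where
  "S1 S = insert None (Some ` S)"

fun rmul1 :: "'q::semigroup_mult \<Rightarrow> 'q option \<Rightarrow> 'q" where
  "rmul1 a None = a"
| "rmul1 a (Some x) = a * x"

definition leqLstar :: "'q::semigroup_mult set \<Rightarrow> 'q \<Rightarrow> 'q \<Rightarrow> bool" where
  "leqLstar S a b \<longleftrightarrow> (\<forall>x\<in>S1 S. \<forall>y\<in>S1 S. rmul1 b x = rmul1 b y \<longrightarrow> rmul1 a x = rmul1 a y)"

definition Lstar :: "'q::semigroup_mult set \<Rightarrow> 'q \<Rightarrow> 'q \<Rightarrow> bool" where
  "Lstar S a b \<longleftrightarrow> leqLstar S a b \<and> leqLstar S b a"

definition idems :: "'q::semigroup_mult set \<Rightarrow> 'q set" where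
  "idems S = {e\<in>S. e * e = e}"

definition right_adequate :: "'q::semigroup_mult set \<Rightarrow> bool" where
  "right_adequate S \<longleftrightarrow> (\<forall>e\<in>idems S. \<forall>f\<in>idems S. e * f = f * e) \<and>
     (\<forall>a\<in>S. \<exists>!e. e \<in> idems S \<and> Lstar S a e)"

definition rstar :: "'q::semigroup_mult set \<Rightarrow> 'q \<Rightarrow> 'q" where
  "rstar S a = (THE e. e \<in> idems S \<and> Lstar S a e)"

definition right_ample :: "'q::semigroup_mult set \<Rightarrow> bool" where
  "right_ample S \<longleftrightarrow> right_adequate S \<and>
     (\<forall>a\<in>S. \<forall>b\<in>S. rstar S b * a = a * rstar S (b * a))"

end

theory Submission
  imports Defs
begin

lemma qinv_props:
  fixes a :: "'q::semigroup_mult"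
  assumes I: "inverse_semigroup TYPE('q)"
  shows "a * qinv a * a = a \<and> qinv a * a * qinv a = qinv a"
proof -
  have "\<exists>!b. a * b * a = a \<and> b * a * b = b" using I unfolding inverse_semigroup_def by blast
  then show ?thesis unfolding qinv_def by (rule theI')
qed

lemma qinv_uniq:
  fixes a b :: "'q::semigroup_mult"
  assumes I: "inverse_semigroup TYPE('q)"
    and "a * b * a = a" "b * a * b = b"
  shows "b = qinv a"
proof -
  have "\<exists>!b. a * b * a = a \<and> b * a * b = b" using I unfolding inverse_semigroup_def by blast
  then show ?thesis unfolding qinv_def using assms(2,3) by (metis (mono_tags, lifting) the_equality)
qed

lemma idem_self_inv:
  fixes e :: "'q::semigroup_mult"
  assumes I: "inverse_semigroup TYPE('q)" and "e * e = e"
  shows "qinv e = e"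
  using qinv_uniq[OF I, of e e] assms(2) by simp

lemma idem_prod_idem:
  fixes e f :: "'q::semigroup_mult"
  assumes I: "inverse_semigroup TYPE('q)" and e: "e * e = e" and f: "f * f = f"
  shows "(e * f) * (e * f) = e * f"
proof -
  define x where "x = qinv (e * f)"
  have x1: "e * f * x * (e * f) = e * f" and x2: "x * (e * f) * x = x"
    using qinv_props[OF I, of "e*f"] unfolding x_def by auto
  have "e * f * (f * x * e) * (e * f) = e * f"
    by (metis x1 e f mult.assoc)
  moreover have "(f * x * e) * (e * f) * (f * x * e) = f * x * e"
    by (metis x2 e f mult.assoc)
  ultimately have xe: "f * x * e = x" using qinv_uniq[OF I] x_def by blast
  have xx: "x * x = x"
    by (metis xe x2 mult.assoc)
  have "qinv x = x" using idem_self_inv[OF I xx] .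
  moreover have "e * f = qinv x" using qinv_uniq[OF I, of x "e*f"] x1 x2 by (simp add: mult.assoc)
  ultimately have "e * f = x" by simp
  then show ?thesis using xx by simp
qed

lemma idem_comm:
  fixes e f :: "'q::semigroup_mult"
  assumes I: "inverse_semigroup TYPE('q)" and e: "e * e = e" and f: "f * f = f"
  shows "e * f = f * e"
proof -
  have ef: "(e * f) * (e * f) = e * f" using idem_prod_idem[OF I e f] .
  have fe: "(f * e) * (f * e) = f * e" using idem_prod_idem[OF I f e] .
  have "e * f * (f * e) * (e * f) = e * f" by (metis ef f e mult.assoc)
  moreover have "f * e * (e * f) * (f * e) = f * e" by (metis fe f e mult.assoc)
  ultimately have "f * e = qinv (e * f)" using qinv_uniq[OF I] by blast
  moreover have "e * f = qinv (e * f)" using qinv_uniq[OF I] ef by (metis mult.assoc)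
  ultimately show ?thesis by simp
qed

lemma E_idem:
  fixes a :: "'q::semigroup_mult"
  assumes I: "inverse_semigroup TYPE('q)"
  shows "(qinv a * a) * (qinv a * a) = qinv a * a"
  using qinv_props[OF I, of a] by (metis mult.assoc)

lemma a_E:
  fixes a :: "'q::semigroup_mult"
  assumes I: "inverse_semigroup TYPE('q)"
  shows "a * (qinv a * a) = a"
  using qinv_props[OF I, of a] by (metis mult.assoc)

lemma leqLQ_iff:
  fixes a b :: "'q::semigroup_mult"
  assumes I: "inverse_semigroup TYPE('q)"
  shows "leqLQ a b \<longleftrightarrow> qinv a * a = qinv a * a * (qinv b * b)"
proof
  assume "leqLQ a b"
  then have "a \<in> Q1mult b" unfolding leqLQ_def Q1mult_def by blast
  then have "a = b \<or> (\<exists>q. a = q * b)" unfolding Q1mult_def by blast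
  then show "qinv a * a = qinv a * a * (qinv b * b)"
  proof
    assume "a = b" then show ?thesis using E_idem[OF I, of a] by simp
  next
    assume "\<exists>q. a = q * b"
    then obtain q where "a = q * b" by blast
    then show ?thesis using a_E[OF I, of b] by (simp add: mult.assoc)
  qed
next
  assume h: "qinv a * a = qinv a * a * (qinv b * b)"
  have "a = a * (qinv a * a)" using a_E[OF I, of a] by simp
  also have "\<dots> = (a * qinv b) * b" by (subst h) (metis a_E[OF I, of a] mult.assoc)
  finally have ab: "a = (a * qinv b) * b" .
  show "leqLQ a b" unfolding leqLQ_def Q1mult_def
  proof
    fix z assume "z \<in> insert a (range (\<lambda>q. q * a))"
    then have "z = a \<or> (\<exists>q. z = q * a)" by blast
    then show "z \<in> insert b (range (\<lambda>q. q * b))"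
    proof
      assume "z = a" then show ?thesis using ab by blast
    next
      assume "\<exists>q. z = q * a"
      then obtain q where "z = q * a" by blast
      then have "z = (q * (a * qinv b)) * b" using ab by (metis mult.assoc)
      then show ?thesis by blast
    qed
  qed
qed

lemma a_Eb:
  fixes a b :: "'q::semigroup_mult"
  assumes I: "inverse_semigroup TYPE('q)"
    and h: "qinv a * a = qinv a * a * (qinv b * b)"
  shows "a = a * (qinv b * b)"
  by (metis a_E[OF I, of a] h mult.assoc)

lemma Lclass_eq_Q1:
  "Lclass a = Lclass b \<longleftrightarrow> Q1mult a = Q1mult b"
  unfolding Lclass_def by auto

lemma Lclass_le_iff:
  "Lclass_le (Lclass a) (Lclass b) \<longleftrightarrow> leqLQ a b"
  unfolding Lclass_le_def leqLQ_def using Lclass_eq_Q1 by metis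

lemma Lmeet_iff:
  fixes a b c :: "'q::semigroup_mult"
  assumes I: "inverse_semigroup TYPE('q)"
  shows "Lmeet_is (Lclass a) (Lclass b) (Lclass c) \<longleftrightarrow>
         qinv c * c = (qinv a * a) * (qinv b * b)"
proof -
  define Ea where "Ea = qinv a * a"
  define Eb where "Eb = qinv b * b"
  define Ec where "Ec = qinv c * c"
  have ia: "Ea * Ea = Ea" using E_idem[OF I] Ea_def by blast
  have ib: "Eb * Eb = Eb" using E_idem[OF I] Eb_def by blast
  have ic: "Ec * Ec = Ec" using E_idem[OF I] Ec_def by blast
  define e where "e = Ea * Eb"
  have ie: "e * e = e" using idem_prod_idem[OF I ia ib] e_def by simp
  have Ee: "qinv e * e = e" using idem_self_inv[OF I ie] ie by simp
  have cab: "Ea * Eb * Ea = Ea * Eb" by (metis idem_comm[OF I ia ib] ia mult.assoc)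
  show ?thesis
  proof
    assume M: "Lmeet_is (Lclass a) (Lclass b) (Lclass c)"
    have "Lclass_le (Lclass e) (Lclass a)" unfolding Lclass_le_iff leqLQ_iff[OF I] Ee
      using cab e_def Ea_def by simp
    moreover have "Lclass_le (Lclass e) (Lclass b)" unfolding Lclass_le_iff leqLQ_iff[OF I] Ee
      using ib e_def Eb_def by (simp add: mult.assoc)
    ultimately have "Lclass_le (Lclass e) (Lclass c)" using M unfolding Lmeet_is_def by blast
    then have h1: "e = e * Ec" unfolding Lclass_le_iff leqLQ_iff[OF I] Ee Ec_def .
    have "Lclass_le (Lclass c) (Lclass a)" "Lclass_le (Lclass c) (Lclass b)"
      using M unfolding Lmeet_is_def by auto
    then have "Ec = Ec * Ea" "Ec = Ec * Eb" unfolding Lclass_le_iff leqLQ_iff[OF I] Ec_def Ea_def Eb_def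
      by auto
    then have h2: "Ec = Ec * e" unfolding e_def by (metis mult.assoc)
    have "Ec = e * Ec" using h2 idem_comm[OF I ic ie] by simp
    then show "qinv c * c = (qinv a * a) * (qinv b * b)" using h1 Ec_def e_def Ea_def Eb_def by simp
  next
    assume h: "qinv c * c = (qinv a * a) * (qinv b * b)"
    then have hc: "Ec = e" using Ec_def e_def Ea_def Eb_def by simp
    have "Lclass_le (Lclass c) (Lclass a)" unfolding Lclass_le_iff leqLQ_iff[OF I]
      using hc cab Ec_def e_def Ea_def by simp
    moreover have "Lclass_le (Lclass c) (Lclass b)" unfolding Lclass_le_iff leqLQ_iff[OF I]
      using hc ib Ec_def e_def Eb_def by (simp add: mult.assoc)
    moreover have "\<forall>D\<in>range Lclass. Lclass_le D (Lclass a) \<and> Lclass_le D (Lclass b) \<longrightarrow> Lclass_le D (Lclass c)"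
    proof (intro ballI impI)
      fix D assume "D \<in> range Lclass" and hD: "Lclass_le D (Lclass a) \<and> Lclass_le D (Lclass b)"
      then obtain d where D: "D = Lclass d" by blast
      have "qinv d * d = qinv d * d * Ea" "qinv d * d = qinv d * d * Eb"
        using hD unfolding D Lclass_le_iff leqLQ_iff[OF I] Ea_def Eb_def by auto
      then have "qinv d * d = qinv d * d * Ec" using hc e_def by (metis mult.assoc)
      then show "Lclass_le D (Lclass c)" unfolding D Lclass_le_iff leqLQ_iff[OF I] Ec_def .
    qed
    ultimately show "Lmeet_is (Lclass a) (Lclass b) (Lclass c)" unfolding Lmeet_is_def by blast
  qed
qed

lemma rstar_in:
  assumes "right_adequate S" "a \<in> S"
  shows "rstar S a \<in> S"
proof -
  have "\<exists>!e. e \<in> idems S \<and> Lstar S a e" using assms unfolding right_adequate_def by blast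
  then have "rstar S a \<in> idems S \<and> Lstar S a (rstar S a)" unfolding rstar_def by (rule theI')
  then show ?thesis unfolding idems_def by blast
qed

theorem lemma4p7:
  fixes S :: "'q::semigroup_mult set"
  assumes "inverse_semigroup TYPE('q)"
    and "subsemigroup S"
    and "right_ample S"
    and "\<forall>a\<in>S. rstar S a = qinv a * a"
    and "a \<in> S" and "b \<in> S" and "c \<in> S" and "x \<in> S"
  shows "(leqLQ a b \<longleftrightarrow> rstar S a = rstar S a * rstar S b)
       \<and> (rstar S a = rstar S a * rstar S b \<longleftrightarrow> leqLstar S a b)
       \<and> (Lmeet_is (Lclass a) (Lclass b) (Lclass c) \<longleftrightarrow> rstar S c = rstar S a * rstar S b)
       \<and> (Lmeet_is (Lclass a) (Lclass b) (Lclass (x * a)) \<longleftrightarrow> a * rstar S b = rstar S x * a)"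
proof -
  note I = assms(1)
  have xa: "x * a \<in> S" using assms(2,5,8) unfolding subsemigroup_def by blast
  have ra: "rstar S a = qinv a * a" and rb: "rstar S b = qinv b * b" and rc: "rstar S c = qinv c * c"
    and rx: "rstar S x = qinv x * x" and rxa: "rstar S (x * a) = qinv (x * a) * (x * a)"
    using assms(4-8) xa by auto
  have amp: "rstar S x * a = a * rstar S (x * a)"
    using assms(3,5,8) unfolding right_ample_def by blast
  have radq: "right_adequate S" using assms(3) unfolding right_ample_def by blast
  have P1: "leqLQ a b \<longleftrightarrow> rstar S a = rstar S a * rstar S b"
    using leqLQ_iff[OF I] ra rb by simp
  have P2: "rstar S a = rstar S a * rstar S b \<longleftrightarrow> leqLstar S a b"
  proof
    assume h: "rstar S a = rstar S a * rstar S b"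
    then have "a = a * (qinv b * b)" using a_Eb[OF I, of a b] ra rb by simp
    then have ab: "a = (a * qinv b) * b" by (simp add: mult.assoc)
    have "rmul1 a z = (a * qinv b) * rmul1 b z" for z
      proof (cases z)
      case None then show ?thesis using ab by simp
    next
      case (Some w) then show ?thesis using ab by (metis rmul1.simps(2) mult.assoc)
    qed
    then show "leqLstar S a b" unfolding leqLstar_def by metis
  next
    assume h: "leqLstar S a b"
    have "rstar S b \<in> S" using rstar_in[OF radq assms(6)] .
    then have "Some (rstar S b) \<in> S1 S" "None \<in> S1 S" unfolding S1_def by auto
    moreover have "rmul1 b (Some (rstar S b)) = rmul1 b None"
      using a_E[OF I, of b] rb by simp
    ultimately have "rmul1 a (Some (rstar S b)) = rmul1 a None" using h unfolding leqLstar_def by blast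
    then have "a * rstar S b = a" by simp
    then show "rstar S a = rstar S a * rstar S b" using ra by (metis mult.assoc)
  qed
  have P3: "Lmeet_is (Lclass a) (Lclass b) (Lclass c) \<longleftrightarrow> rstar S c = rstar S a * rstar S b"
    using Lmeet_iff[OF I] ra rb rc by simp
  have P4: "Lmeet_is (Lclass a) (Lclass b) (Lclass (x * a)) \<longleftrightarrow> a * rstar S b = rstar S x * a"
  proof -
    have "Lmeet_is (Lclass a) (Lclass b) (Lclass (x * a)) \<longleftrightarrow> rstar S (x * a) = rstar S a * rstar S b"
      using Lmeet_iff[OF I] ra rb rxa by simp
    also have "\<dots> \<longleftrightarrow> a * rstar S b = rstar S x * a"
    proof
      assume h: "rstar S (x * a) = rstar S a * rstar S b"
      have "a * rstar S b = a * (rstar S a * rstar S b)" using a_E[OF I, of a] ra by (metis mult.assoc)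
      then show "a * rstar S b = rstar S x * a" using h amp by simp
    next
      assume h: "a * rstar S b = rstar S x * a"
      have "leqLQ (x * a) a" unfolding leqLQ_def Q1mult_def
        by (auto simp: image_iff) (metis mult.assoc)
      then have l: "rstar S (x * a) = rstar S (x * a) * rstar S a" using leqLQ_iff[OF I] ra rxa by simp
      have i1: "rstar S (x * a) * rstar S (x * a) = rstar S (x * a)" using E_idem[OF I] rxa by simp
      have i2: "rstar S a * rstar S a = rstar S a" using E_idem[OF I] ra by simp
      have "rstar S a * rstar S b = qinv a * (a * rstar S b)" using ra by (simp add: mult.assoc)
      also have "\<dots> = qinv a * (a * rstar S (x * a))" using h amp by simp
      also have "\<dots> = rstar S a * rstar S (x * a)" using ra by (simp add: mult.assoc)
      also have "\<dots> = rstar S (x * a)" using l idem_comm[OF I i1 i2] by simp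
      finally show "rstar S (x * a) = rstar S a * rstar S b" by simp
    qed
    finally show ?thesis .
  qed
  show ?thesis using P1 P2 P3 P4 by blast
qed

end
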